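(* Let $X$ be a finite simple graph, $\pi\in S_X$, and $\phi\in\{\mathbf{F}^\updownarrow_\pi,\mathbf{F}^\uparrow_\pi,\mathbf{F}^\downarrow_\pi\}$. If for a state $s\in\mathcal{S}$ the transition $s\mapsto\phi(s)$ is unidirectional, then every transition $\phi^t(s)\mapsto\phi^{t+1}(s)$, $t\ge 0$, along the forward orbit of $s$ is unidirectional and in the same direction as that of $s\mapsto\phi(s)$.
   Context: Let $X$ be a finite simple graph with vertices $1,\dots,n$; $d(v)$ is the degree of $v$ and $n[v]$ the closed neighborhood of $v$. An extended vertex state is $s_v=(x_v,k_v)\in\{0,1\}\times\{1,\dots,d(v)+1\}$; $\mathcal{S}$ is the product of these sets. Let $\sigma(x[v])=|\{u\in n[v]:x_u=1\}|$. All vertex functions set $x_v'=1$ iff $\sigma(x[v])\ge k_v$ (else $0$). Increasing ($\uparrow$): $k_v'=k_v+1$ if $x_v=0$ and $\sigma(x[v])\ge k_v$, else $k_v$. Decreasing ($\downarrow$): $k_v'=k_v-1$ if $x_v=1$ and $\sigma(x[v])<k_v$, else $k_v$. Mixed ($\updownarrow$): both of these changes, $k_v$ unchanged otherwise. The local map $F^\star_v$ updates only coordinate $v$; for a permutation $\pi=(\pi_1,\dots,\pi_n)$, $\mathbf{F}^\star_\pi=F^\star_{\pi_n}\circ\cdots\circ F^\star_{\pi_1}$. A transition $(x,k)\mapsto(x',k')$ is unidirectional if either all vertices $v$ with $x_v\ne x'_v$ satisfy $x_v=0,x_v'=1$, or all such vertices satisfy $x_v=1,x_v'=0$. *)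

theory Defs
  imports Main
begin

text \<open>Finite simple graph: finite vertex set V, symmetric irreflexive adjacency E.
  Extended vertex state: x v (True = 1, False = 0) and threshold k v.\<close>

type_synonym 'a xstate = "('a \<Rightarrow> bool) \<times> ('a \<Rightarrow> nat)"

definition simple_graph :: "'a set \<Rightarrow> ('a \<Rightarrow> 'a \<Rightarrow> bool) \<Rightarrow> bool" where
  "simple_graph V E \<longleftrightarrow> finite V \<and> (\<forall>u v. E u v \<longrightarrow> E v u) \<and> (\<forall>v. \<not> E v v)"

definition nbhd :: "'a set \<Rightarrow> ('a \<Rightarrow> 'a \<Rightarrow> bool) \<Rightarrow> 'a \<Rightarrow> 'a set" where
  "nbhd V E v = {u \<in> V. E v u}"

definition closed_nbhd :: "'a set \<Rightarrow> ('a \<Rightarrow> 'a \<Rightarrow> bool) \<Rightarrow> 'a \<Rightarrow> 'a set" where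
  "closed_nbhd V E v = insert v (nbhd V E v)"

definition degree :: "'a set \<Rightarrow> ('a \<Rightarrow> 'a \<Rightarrow> bool) \<Rightarrow> 'a \<Rightarrow> nat" where
  "degree V E v = card (nbhd V E v)"

definition sigma :: "'a set \<Rightarrow> ('a \<Rightarrow> 'a \<Rightarrow> bool) \<Rightarrow> ('a \<Rightarrow> bool) \<Rightarrow> 'a \<Rightarrow> nat" where
  "sigma V E x v = card {u \<in> closed_nbhd V E v. x u}"

text \<open>The state space \<open>\<S>\<close>: x v \<in> {0,1} is automatic, k v \<in> {1..d(v)+1}.\<close>
definition state_space :: "'a set \<Rightarrow> ('a \<Rightarrow> 'a \<Rightarrow> bool) \<Rightarrow> 'a xstate set" where
  "state_space V E = {(x, k). \<forall>v\<in>V. 1 \<le> k v \<and> k v \<le> degree V E v + 1}"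

datatype mode = Increasing | Decreasing | Mixed

definition new_threshold :: "mode \<Rightarrow> bool \<Rightarrow> nat \<Rightarrow> nat \<Rightarrow> nat" where
  "new_threshold m xv sg kv =
     (if (m = Increasing \<or> m = Mixed) \<and> \<not> xv \<and> sg \<ge> kv then kv + 1
      else if (m = Decreasing \<or> m = Mixed) \<and> xv \<and> sg < kv then kv - 1
      else kv)"

definition local_map :: "mode \<Rightarrow> 'a set \<Rightarrow> ('a \<Rightarrow> 'a \<Rightarrow> bool) \<Rightarrow> 'a \<Rightarrow> 'a xstate \<Rightarrow> 'a xstate" where
  "local_map m V E v s =
     (let x = fst s; k = snd s; sg = sigma V E x v in
      (x(v := (sg \<ge> k v)), k(v := new_threshold m (x v) sg (k v))))"

text \<open>Sequential map F_pi = F_{pi_n} o ... o F_{pi_1} (pi_1 applied first).\<close>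
definition seq_map :: "mode \<Rightarrow> 'a set \<Rightarrow> ('a \<Rightarrow> 'a \<Rightarrow> bool) \<Rightarrow> 'a list \<Rightarrow> 'a xstate \<Rightarrow> 'a xstate" where
  "seq_map m V E pi s = fold (local_map m V E) pi s"

definition is_permutation_of :: "'a list \<Rightarrow> 'a set \<Rightarrow> bool" where
  "is_permutation_of pi V \<longleftrightarrow> distinct pi \<and> set pi = V"

definition up_transition :: "'a set \<Rightarrow> 'a xstate \<Rightarrow> 'a xstate \<Rightarrow> bool" where
  "up_transition V s s' \<longleftrightarrow> (\<forall>v\<in>V. fst s v \<noteq> fst s' v \<longrightarrow> \<not> fst s v \<and> fst s' v)"

definition down_transition :: "'a set \<Rightarrow> 'a xstate \<Rightarrow> 'a xstate \<Rightarrow> bool" where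
  "down_transition V s s' \<longleftrightarrow> (\<forall>v\<in>V. fst s v \<noteq> fst s' v \<longrightarrow> fst s v \<and> \<not> fst s' v)"

definition unidirectional :: "'a set \<Rightarrow> 'a xstate \<Rightarrow> 'a xstate \<Rightarrow> bool" where
  "unidirectional V s s' \<longleftrightarrow> up_transition V s s' \<or> down_transition V s s'"

end

theory Submission
  imports Defs
begin

lemma lm_other: "u \<noteq> v \<Longrightarrow> fst (local_map m V E v s) u = fst s u \<and> snd (local_map m V E v s) u = snd s u"
  by (simp add: local_map_def Let_def)

lemma lm_self: "fst (local_map m V E v s) v = (sigma V E (fst s) v \<ge> snd s v) \<and>
   snd (local_map m V E v s) v = new_threshold m (fst s v) (sigma V E (fst s) v) (snd s v)"
  by (simp add: local_map_def Let_def)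

lemma fold_other: "u \<notin> set ws \<Longrightarrow> fst (fold (local_map m V E) ws s) u = fst s u \<and> snd (fold (local_map m V E) ws s) u = snd s u"
  by (induction ws arbitrary: s) (auto simp: lm_other)

lemma sigma_mono: "finite V \<Longrightarrow> \<forall>u. x u \<longrightarrow> y u \<Longrightarrow> sigma V E x v \<le> sigma V E y v"
  unfolding sigma_def closed_nbhd_def nbhd_def
  by (rule card_mono) auto

lemma sigma_strict: "finite V \<Longrightarrow> \<forall>u. x u \<longrightarrow> y u \<Longrightarrow> \<not> x v \<Longrightarrow> y v \<Longrightarrow> sigma V E x v < sigma V E y v"
  unfolding sigma_def closed_nbhd_def nbhd_def
  by (rule psubset_card_mono) auto

lemma split_at:
  assumes "distinct pi" "i < length pi"
  shows "pi!i \<notin> set (take i pi) \<and> pi!i \<notin> set (drop (Suc i) pi)"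
proof -
  have "pi = take i pi @ pi!i # drop (Suc i) pi" using assms(2) by (simp add: id_take_nth_drop)
  then have "distinct (take i pi @ pi!i # drop (Suc i) pi)" using assms(1) by simp
  then show ?thesis by auto
qed

lemma round_gen:
  assumes fin: "finite V" and dist: "distinct pi"
    and rel0: "\<forall>u. R (fst s0 u) (fst s1 u)"
    and s1: "s1 = fold (local_map m V E) pi s0"
    and key: "\<And>a b v. (\<forall>u. R (fst a u) (fst b u)) \<Longrightarrow> R (fst a v) (fst b v) \<Longrightarrow>
        fst b v = (sigma V E (fst a) v \<ge> snd a v) \<Longrightarrow>
        snd b v = new_threshold m (fst a v) (sigma V E (fst a) v) (snd a v) \<Longrightarrow>
        R (sigma V E (fst a) v \<ge> snd a v) (sigma V E (fst b) v \<ge> snd b v)"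
    and Rrefl: "\<And>x. R x x"
  shows "\<forall>u. R (fst s1 u) (fst (fold (local_map m V E) pi s1) u)"
proof -
  let ?f = "local_map m V E"
  have inv: "i \<le> length pi \<Longrightarrow> \<forall>u. R (fst (fold ?f (take i pi) s0) u) (fst (fold ?f (take i pi) s1) u)" for i
  proof (induction i)
    case 0 then show ?case using rel0 by simp
  next
    case (Suc i)
    define v where "v = pi!i"
    define a where "a = fold ?f (take i pi) s0"
    define b where "b = fold ?f (take i pi) s1"
    have il: "i < length pi" using Suc by simp
    have tk: "take (Suc i) pi = take i pi @ [v]" using il by (simp add: v_def take_Suc_conv_app_nth)
    have IH: "\<forall>u. R (fst a u) (fst b u)" using Suc a_def b_def by simp
    have nv: "v \<notin> set (take i pi)" "v \<notin> set (drop (Suc i) pi)" using split_at[OF dist il] v_def by auto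
    have av: "fst a v = fst s0 v" "snd a v = snd s0 v" using fold_other[OF nv(1)] a_def by auto
    have bv: "fst b v = fst s1 v" "snd b v = snd s1 v" using fold_other[OF nv(1)] b_def by auto
    have "s1 = fold ?f (drop (Suc i) pi) (fold ?f (take (Suc i) pi) s0)"
      using s1 by (metis append_take_drop_id fold_append comp_apply)
    then have eq: "s1 = fold ?f (drop (Suc i) pi) (?f v a)" using tk a_def by simp
    have s1v: "fst s1 v = fst (?f v a) v" "snd s1 v = snd (?f v a) v"
      using fold_other[OF nv(2), of m V E "?f v a"] unfolding eq[symmetric] by auto
    have r: "R (fst a v) (fst b v)" using IH by blast
    have "R (fst (?f v a) v) (fst (?f v b) v)"
      using key[OF IH r] bv s1v lm_self[of m V E v a] lm_self[of m V E v b] by simp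
    then have "\<forall>u. R (fst (?f v a) u) (fst (?f v b) u)"
    proof (intro allI)
      fix u
      assume hv: "R (fst (?f v a) v) (fst (?f v b) v)"
      show "R (fst (?f v a) u) (fst (?f v b) u)"
      proof (cases "u = v")
        case True then show ?thesis using hv by simp
      next
        case False then show ?thesis using IH lm_other[OF False, of m V E a] lm_other[OF False, of m V E b] by simp
      qed
    qed
    then show ?case using tk a_def b_def by simp
  qed
  from inv[of "length pi"] show ?thesis using s1 by simp
qed


lemma round_up:
  assumes fin: "finite V" and dist: "distinct pi"
    and rel0: "\<forall>u. fst s0 u \<longrightarrow> fst s1 u"
    and s1: "s1 = fold (local_map m V E) pi s0"
  shows "\<forall>u. fst s1 u \<longrightarrow> fst (fold (local_map m V E) pi s1) u"
proof (rule round_gen[where R="\<lambda>p q. p \<longrightarrow> q", OF fin dist rel0 s1])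
  fix a b :: "'a xstate" and v
  assume IH: "\<forall>u. fst a u \<longrightarrow> fst b u" and r: "fst a v \<longrightarrow> fst b v"
    and bx: "fst b v = (sigma V E (fst a) v \<ge> snd a v)"
    and bk: "snd b v = new_threshold m (fst a v) (sigma V E (fst a) v) (snd a v)"
  have le: "sigma V E (fst a) v \<le> sigma V E (fst b) v" using sigma_mono[OF fin IH] .
  have lt: "\<not> fst a v \<Longrightarrow> fst b v \<Longrightarrow> sigma V E (fst a) v < sigma V E (fst b) v"
    using sigma_strict[OF fin IH] by blast
  show "sigma V E (fst a) v \<ge> snd a v \<longrightarrow> sigma V E (fst b) v \<ge> snd b v"
  proof
    assume h: "sigma V E (fst a) v \<ge> snd a v"
    show "sigma V E (fst b) v \<ge> snd b v"
    proof (cases "fst a v")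
      case True
      then have "snd b v = snd a v" using bk h by (auto simp: new_threshold_def)
      then show ?thesis using h le by simp
    next
      case False
      then have "snd b v \<le> snd a v + 1" using bk by (auto simp: new_threshold_def)
      moreover have "fst b v" using bx h by simp
      ultimately show ?thesis using lt False h by linarith
    qed
  qed
qed simp

lemma round_down:
  assumes fin: "finite V" and dist: "distinct pi"
    and rel0: "\<forall>u. fst s1 u \<longrightarrow> fst s0 u"
    and s1: "s1 = fold (local_map m V E) pi s0"
  shows "\<forall>u. fst (fold (local_map m V E) pi s1) u \<longrightarrow> fst s1 u"
proof (rule round_gen[where R="\<lambda>p q. q \<longrightarrow> p", OF fin dist rel0 s1])
  fix a b :: "'a xstate" and v
  assume IH: "\<forall>u. fst b u \<longrightarrow> fst a u" and r: "fst b v \<longrightarrow> fst a v"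
    and bx: "fst b v = (sigma V E (fst a) v \<ge> snd a v)"
    and bk: "snd b v = new_threshold m (fst a v) (sigma V E (fst a) v) (snd a v)"
  have le: "sigma V E (fst b) v \<le> sigma V E (fst a) v" using sigma_mono[OF fin IH] .
  have lt: "\<not> fst b v \<Longrightarrow> fst a v \<Longrightarrow> sigma V E (fst b) v < sigma V E (fst a) v"
    using sigma_strict[OF fin IH] by blast
  show "sigma V E (fst b) v \<ge> snd b v \<longrightarrow> sigma V E (fst a) v \<ge> snd a v"
  proof
    assume h: "sigma V E (fst b) v \<ge> snd b v"
    show "sigma V E (fst a) v \<ge> snd a v"
    proof (rule ccontr)
      assume h2: "\<not> sigma V E (fst a) v \<ge> snd a v"
      then have nb: "\<not> fst b v" using bx by simp
      show False
      proof (cases "fst a v")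
        case False
        then have "snd b v = snd a v" using bk h2 by (auto simp: new_threshold_def)
        then show False using h h2 le by simp
      next
        case True
        then have "snd b v \<ge> snd a v - 1" using bk by (auto simp: new_threshold_def)
        then show False using lt[OF nb True] h h2 by linarith
      qed
    qed
  qed
qed simp

theorem proposition3p9:
  fixes V :: "'a set" and E :: "'a \<Rightarrow> 'a \<Rightarrow> bool" and pi :: "'a list"
    and m :: mode and s :: "'a xstate"
  assumes "simple_graph V E"
    and "is_permutation_of pi V"
    and "s \<in> state_space V E"
    and "unidirectional V s (seq_map m V E pi s)"
  shows "(up_transition V s (seq_map m V E pi s) \<longrightarrow>
            (\<forall>t. up_transition V ((seq_map m V E pi ^^ t) s) ((seq_map m V E pi ^^ Suc t) s)))
       \<and> (down_transition V s (seq_map m V E pi s) \<longrightarrow>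
            (\<forall>t. down_transition V ((seq_map m V E pi ^^ t) s) ((seq_map m V E pi ^^ Suc t) s)))"
proof -
  let ?F = "seq_map m V E pi"
  have fin: "finite V" using assms(1) by (simp add: simple_graph_def)
  have dist: "distinct pi" and sp: "set pi = V" using assms(2) by (auto simp: is_permutation_of_def)
  have out: "u \<notin> V \<Longrightarrow> fst (?F q) u = fst q u" for u q
    using fold_other[of u pi m V E q] sp by (simp add: seq_map_def)
  have F: "?F q = fold (local_map m V E) pi q" for q by (simp add: seq_map_def)
  have upg: "up_transition V q (?F q) \<longleftrightarrow> (\<forall>u. fst q u \<longrightarrow> fst (?F q) u)" for q
    unfolding up_transition_def by (metis out)
  have dng: "down_transition V q (?F q) \<longleftrightarrow> (\<forall>u. fst (?F q) u \<longrightarrow> fst q u)" for q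
    unfolding down_transition_def by (metis out)
  have A: "up_transition V s (?F s) \<longrightarrow> (\<forall>t. up_transition V ((?F ^^ t) s) ((?F ^^ Suc t) s))"
  proof (intro impI allI)
    fix t assume h: "up_transition V s (?F s)"
    have "\<forall>u. fst ((?F ^^ t) s) u \<longrightarrow> fst ((?F ^^ Suc t) s) u"
    proof (induction t)
      case 0 then show ?case using h upg by simp
    next
      case (Suc t)
      have e: "(?F ^^ Suc t) s = fold (local_map m V E) pi ((?F ^^ t) s)" using F by simp
      show ?case using round_up[OF fin dist Suc.IH e] by (simp only: funpow.simps(2) comp_apply F[symmetric])
    qed
    then show "up_transition V ((?F ^^ t) s) ((?F ^^ Suc t) s)" using upg by simp
  qed
  have B: "down_transition V s (?F s) \<longrightarrow> (\<forall>t. down_transition V ((?F ^^ t) s) ((?F ^^ Suc t) s))"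
  proof (intro impI allI)
    fix t assume h: "down_transition V s (?F s)"
    have "\<forall>u. fst ((?F ^^ Suc t) s) u \<longrightarrow> fst ((?F ^^ t) s) u"
    proof (induction t)
      case 0 then show ?case using h dng by simp
    next
      case (Suc t)
      have e: "(?F ^^ Suc t) s = fold (local_map m V E) pi ((?F ^^ t) s)" using F by simp
      show ?case using round_down[OF fin dist Suc.IH e] by (simp only: funpow.simps(2) comp_apply F[symmetric])
    qed
    then show "down_transition V ((?F ^^ t) s) ((?F ^^ Suc t) s)" using dng by simp
  qed
  show ?thesis using A B by blast
qed

end
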